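(* Let $p\ge1$, $0\le q<2p$, $D_p>0$, $K_q>0$, and suppose that for $0<\epsilon\le\epsilon_0$ and all $B>0$ \[ \Delta_{\mathrm{MSE}}(\epsilon,B)=D_p\epsilon^{2p}-\frac{K_q\epsilon^q}{B}+R_p(\epsilon,B),\qquad |R_p(\epsilon,B)|\le L_b\epsilon^{2p+\delta_b}+L_v\frac{\epsilon^{q+\delta_v}}{B}, \] with $L_b,L_v,\delta_b,\delta_v>0$. Let $C=(K_q/D_p)^{1/(2p-q)}$, $r=1/(2p-q)$, $f_{p,q}(x)=D_px^{2p}-K_qx^q$, fix $0<\rho<1$, set $x_-=(1-\rho)C$, $x_+=(1+\rho)C$, and \[ \mathfrak m_\rho=\min\{K_qx_-^q-D_px_-^{2p},\;D_px_+^{2p}-K_qx_+^q\}>0. \] If \[ B\ge B_0(\rho):=\max\left\{\left(\frac{4L_bx_+^{2p+\delta_b}}{\mathfrak m_\rho}\right)^{1/(r\delta_b)},\left(\frac{4L_vx_+^{q+\delta_v}}{\mathfrak m_\rho}\right)^{1/(r\delta_v)},\left(\frac{x_+}{\epsilon_0}\right)^{1/r}\right\}, \] then $\Delta_{\mathrm{MSE}}(x_-B^{-r},B)<0$ and $\Delta_{\mathrm{MSE}}(x_+B^{-r},B)>0$; consequently at least one sign-changing crossing $\epsilon^*_{\mathrm{loc}}(B)$ of $\Delta_{\mathrm{MSE}}(\cdot,B)$ lies in \[ (1-\rho)CB^{-r}\le\epsilon^*_{\mathrm{loc}}(B)\le(1+\rho)CB^{-r}. \] If in addition $f_{p,q}'>0$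 on $[x_-,x_+]$ and the $x$-derivative of the rescaled remainder $\eta_B(x)=B^{2pr}R_p(xB^{-r},B)$ is bounded in absolute value on $[x_-,x_+]$ by less than half of $\min_{[x_-,x_+]}f'_{p,q}$, then the crossing in this bracket is unique.
   Context: $\Delta_{\mathrm{MSE}}(\epsilon,B)$ is the mean-squared-error difference (unmitigated minus zero-noise-extrapolated) at noise strength $\epsilon$ and total shot budget $B$. *)

theory Defs
  imports Complex_Main
begin

definition sign_crossing :: "(real \<Rightarrow> real) \<Rightarrow> real \<Rightarrow> bool" where
  "sign_crossing h e \<longleftrightarrow> h e = 0 \<and>
     (\<forall>d>0. \<exists>u. e - d < u \<and> u < e \<and> h u < 0) \<and>
     (\<forall>d>0. \<exists>v. e < v \<and> v < e + d \<and> h v \<ge> 0)"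

end

theory Submission
  imports Defs begin

lemma crossing_exists:
  fixes h :: "real \<Rightarrow> real"
  assumes ab: "a < b" and c: "continuous_on {a..b} h" and ha: "h a < 0" and hb: "h b > 0"
  shows "\<exists>e. a \<le> e \<and> e \<le> b \<and> sign_crossing h e"
proof -
  define S where "S = {t\<in>{a..b}. h t < 0}"
  define e where "e = Sup S"
  have aS: "a \<in> S" using ab ha by (auto simp: S_def)
  have ne: "S \<noteq> {}" using aS by auto
  have bdd: "bdd_above S" unfolding S_def by (rule bdd_aboveI[of _ b]) auto
  have ae: "a \<le> e" unfolding e_def using aS bdd by (rule cSup_upper)
  have eb: "e \<le> b" unfolding e_def using ne by (rule cSup_least) (auto simp: S_def)
  have up: "t \<le> e" if "t \<in> S" for t unfolding e_def using that bdd by (rule cSup_upper)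
  have ee: "e \<in> {a..b}" using ae eb by auto
  have cont: "\<forall>\<epsilon>>0. \<exists>\<delta>>0. \<forall>t\<in>{a..b}. dist t e < \<delta> \<longrightarrow> dist (h t) (h e) < \<epsilon>"
  proof (intro allI impI)
    fix \<epsilon> :: real assume ep: "\<epsilon> > 0"
    have "(h \<longlongrightarrow> h e) (at e within {a..b})"
      using c ee unfolding continuous_on_def by blast
    then have "eventually (\<lambda>t. dist (h t) (h e) < \<epsilon>) (at e within {a..b})"
      using ep by (rule tendstoD)
    then obtain \<delta> where d: "\<delta> > 0" "\<forall>t\<in>{a..b}. t \<noteq> e \<and> dist t e < \<delta> \<longrightarrow> dist (h t) (h e) < \<epsilon>"
      unfolding eventually_at by blast
    show "\<exists>\<delta>>0. \<forall>t\<in>{a..b}. dist t e < \<delta> \<longrightarrow> dist (h t) (h e) < \<epsilon>"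
    proof (intro exI[of _ \<delta>] conjI ballI impI)
      fix t assume "t \<in> {a..b}" "dist t e < \<delta>"
      then show "dist (h t) (h e) < \<epsilon>" using d ep by (cases "t = e") auto
    qed (rule d(1))
  qed
  have ge: "h e \<ge> 0"
  proof (rule ccontr)
    assume n: "\<not> h e \<ge> 0"
    then have "e < b" using eb hb by (cases "e = b") auto
    obtain \<delta> where d: "\<delta> > 0" "\<forall>t\<in>{a..b}. dist t e < \<delta> \<longrightarrow> dist (h t) (h e) < - h e"
      using cont n by force
    define t where "t = min b (e + \<delta>/2)"
    have "t \<in> {a..b}" "dist t e < \<delta>" using \<open>e < b\<close> d ae by (auto simp: t_def dist_real_def)
    then have "h t < 0" using d(2) by (auto simp: dist_real_def)
    then have "t \<in> S" using \<open>t \<in> {a..b}\<close> by (auto simp: S_def)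
    moreover have "t > e" using \<open>e < b\<close> d by (auto simp: t_def)
    ultimately show False using up by force
  qed
  have left: "\<exists>u. e - d < u \<and> u < e \<and> h u < 0" if "d > 0" for d
  proof -
    have "e - d < Sup S" using that e_def by simp
    then obtain u where u: "u \<in> S" "e - d < u" using ne by (blast elim: less_cSupE)
    have "u \<noteq> e" using u ge by (auto simp: S_def)
    then show ?thesis using u up[OF u(1)] by (auto simp: S_def)
  qed
  have le: "h e \<le> 0"
  proof (rule ccontr)
    assume n: "\<not> h e \<le> 0"
    obtain \<delta> where d: "\<delta> > 0" "\<forall>t\<in>{a..b}. dist t e < \<delta> \<longrightarrow> dist (h t) (h e) < h e"
      using cont n by force
    have "e - \<delta> < Sup S" using d e_def by simp
    then obtain u where u: "u \<in> S" "e - \<delta> < u" using ne by (blast elim: less_cSupE)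
    have "u \<in> {a..b}" "dist u e < \<delta>" using u up[OF u(1)] by (auto simp: S_def dist_real_def)
    then have "h u > 0" using d(2) by (auto simp: dist_real_def)
    then show False using u by (auto simp: S_def)
  qed
  have he: "h e = 0" using ge le by simp
  have "e \<noteq> b" using he hb by auto
  have right: "\<exists>v. e < v \<and> v < e + d \<and> h v \<ge> 0" if "d > 0" for d
  proof -
    define v where "v = min b (e + d/2)"
    have "v > e" "v < e + d" "v \<in> {a..b}" using \<open>e \<noteq> b\<close> eb ae that by (auto simp: v_def)
    then have "v \<notin> S" using up by force
    then show ?thesis using \<open>v > e\<close> \<open>v < e + d\<close> \<open>v \<in> {a..b}\<close> by (auto simp: S_def)
  qed
  show ?thesis using ae eb he left right unfolding sign_crossing_def by blast
qed

lemma strict_mono_deriv: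
  fixes g g' :: "real \<Rightarrow> real"
  assumes d: "\<And>x. x \<in> {a..b} \<Longrightarrow> (g has_real_derivative g' x) (at x within {a..b})"
    and pos: "\<And>x. x \<in> {a..b} \<Longrightarrow> g' x > 0"
    and xy: "a \<le> x" "x < y" "y \<le> b"
  shows "g x < g y"
proof (rule DERIV_pos_imp_increasing_open[OF xy(2)])
  fix z assume z: "x < z" "z < y"
  have "at z within {a..b} = at z" using z xy by (intro at_within_Icc_at) auto
  then show "\<exists>l. (g has_real_derivative l) (at z) \<and> 0 < l"
    using d[of z] pos[of z] z xy by auto
next
  have "continuous_on {a..b} g" by (rule DERIV_continuous_on[OF d])
  then show "continuous_on {x..y} g" by (rule continuous_on_subset) (use xy in auto)
qed


lemma bnd_aux:
  fixes L P m k B Y :: real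
  assumes "0 < L" "0 < P" "0 < m" "0 < k" "B \<ge> (4*L*P/m) powr (1/k)" "0 \<le> Y" "Y \<le> P"
  shows "L * Y * B powr (-k) \<le> m/4"
proof -
  define X where "X = 4*L*P/m"
  have X: "X > 0" using assms by (simp add: X_def)
  have "X = (X powr (1/k)) powr k" using X assms by (simp add: powr_powr)
  also have "\<dots> \<le> B powr k" using assms X by (intro powr_mono2) (auto simp: X_def)
  finally have XB: "X \<le> B powr k" .
  have Bp: "B powr k > 0" using XB X by linarith
  have "B powr (-k) = inverse (B powr k)" by (simp add: powr_minus)
  also have "\<dots> \<le> inverse X" using XB X by (intro le_imp_inverse_le) auto
  finally have "B powr (-k) \<le> m / (4*L*P)" by (simp add: X_def)
  then have "L * Y * B powr (-k) \<le> L * P * (m / (4*L*P))"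
    using assms Bp by (intro mult_mono) (auto intro: mult_mono)
  also have "\<dots> = m/4" using assms by (simp add: field_simps)
  finally show ?thesis .
qed

theorem proposition7:
  fixes Delta R :: "real \<Rightarrow> real \<Rightarrow> real"
    and p q Dp Kq eps0 Lb Lv db dv rho B C r xm xp m B0 :: real
    and f' :: "real \<Rightarrow> real"
  assumes p: "p \<ge> 1" and q: "0 \<le> q" "q < 2 * p"
    and Dp: "Dp > 0" and Kq: "Kq > 0" and eps0: "eps0 > 0"
    and L: "Lb > 0" "Lv > 0" "db > 0" "dv > 0"
    and expand: "\<And>e B. 0 < e \<Longrightarrow> e \<le> eps0 \<Longrightarrow> B > 0 \<Longrightarrow>
        Delta e B = Dp * e powr (2 * p) - Kq * e powr q / B + R e B"
    and remainder: "\<And>e B. 0 < e \<Longrightarrow> e \<le> eps0 \<Longrightarrow> B > 0 \<Longrightarrow>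
        \<bar>R e B\<bar> \<le> Lb * e powr (2 * p + db) + Lv * e powr (q + dv) / B"
    and cont: "\<And>B. B > 0 \<Longrightarrow> continuous_on {0<..eps0} (\<lambda>e. Delta e B)"
    and rho: "0 < rho" "rho < 1"
  assumes C_def: "C = (Kq / Dp) powr (1 / (2 * p - q))"
    and r_def: "r = 1 / (2 * p - q)"
    and f'_def: "f' = (\<lambda>x. 2 * p * Dp * x powr (2 * p - 1) - q * Kq * x powr (q - 1))"
    and xm_def: "xm = (1 - rho) * C"
    and xp_def: "xp = (1 + rho) * C"
    and m_def: "m = min (Kq * xm powr q - Dp * xm powr (2 * p)) (Dp * xp powr (2 * p) - Kq * xp powr q)"
    and B0_def: "B0 = Max {(4 * Lb * xp powr (2 * p + db) / m) powr (1 / (r * db)),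
                    (4 * Lv * xp powr (q + dv) / m) powr (1 / (r * dv)),
                    (xp / eps0) powr (1 / r)}"
    and B: "B \<ge> B0"
  shows "m > 0
    \<and> Delta (xm * B powr (- r)) B < 0
    \<and> Delta (xp * B powr (- r)) B > 0
    \<and> (\<exists>e. xm * B powr (- r) \<le> e \<and> e \<le> xp * B powr (- r) \<and> sign_crossing (\<lambda>e'. Delta e' B) e)
    \<and> (((\<forall>x\<in>{xm..xp}. f' x > 0) \<and>
         (\<exists>eta' M. (\<forall>x\<in>{xm..xp}.
              ((\<lambda>y. B powr (2 * p * r) * R (y * B powr (- r)) B) has_real_derivative eta' x)
                 (at x within {xm..xp}) \<and> \<bar>eta' x\<bar> \<le> M)
            \<and> M < (INF x\<in>{xm..xp}. f' x) / 2))
       \<longrightarrow> (\<exists>!e. xm * B powr (- r) \<le> e \<and> e \<le> xp * B powr (- r) \<and> sign_crossing (\<lambda>e'. Delta e' B) e))"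
proof -
  have pq: "2*p - q > 0" using q by simp
  have r: "r > 0" "r * (2*p - q) = 1" using pq by (auto simp: r_def)
  have Cp: "C > 0" using Kq Dp by (simp add: C_def)
  have CC: "C powr (2*p - q) = Kq / Dp" using Kq Dp pq by (simp add: C_def powr_powr)
  have xm: "xm > 0" and xp: "xp > 0" and xmp: "xm < xp" using Cp rho by (auto simp: xm_def xp_def)
  define f where "f y = Dp * y powr (2*p) - Kq * y powr q" for y
  have split: "y powr (2*p) = y powr q * y powr (2*p - q)" if "y > 0" for y :: real
    using that by (simp add: powr_add[symmetric])
  have m1: "Kq * xm powr q - Dp * xm powr (2 * p) > 0"
  proof -
    have "xm powr (2*p - q) = (1-rho) powr (2*p-q) * (Kq/Dp)"
      using rho Cp CC by (simp add: xm_def powr_mult)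
    moreover have "(1-rho) powr (2*p-q) < 1" using rho pq powr_less_mono2[of "2*p-q" "1-rho" 1] by simp
    moreover have "Kq/Dp > 0" using Kq Dp by simp
    ultimately have "(1-rho) powr (2*p-q) * (Kq/Dp) < 1 * (Kq/Dp)" by (intro mult_strict_right_mono)
    with \<open>xm powr (2*p - q) = (1-rho) powr (2*p-q) * (Kq/Dp)\<close>
    have "xm powr (2*p - q) < Kq/Dp" by (simp only: mult_1)
    then have "Dp * xm powr (2*p - q) < Kq" using Dp by (simp add: field_simps)
    then have "xm powr q * (Dp * xm powr (2*p - q)) < xm powr q * Kq" using xm by simp
    then show ?thesis using split[OF xm] by (simp add: algebra_simps)
  qed
  have m2: "Dp * xp powr (2 * p) - Kq * xp powr q > 0"
  proof -
    have "xp powr (2*p - q) = (1+rho) powr (2*p-q) * (Kq/Dp)"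
      using rho Cp CC by (simp add: xp_def powr_mult)
    moreover have "(1+rho) powr (2*p-q) > 1" using rho pq by (intro gr_one_powr) auto
    moreover have "Kq/Dp > 0" using Kq Dp by simp
    ultimately have "1 * (Kq/Dp) < (1+rho) powr (2*p-q) * (Kq/Dp)" by (intro mult_strict_right_mono)
    with \<open>xp powr (2*p - q) = (1+rho) powr (2*p-q) * (Kq/Dp)\<close>
    have "xp powr (2*p - q) > Kq/Dp" by (simp only: mult_1)
    then have "Dp * xp powr (2*p - q) > Kq" using Dp by (simp add: field_simps)
    then have "xp powr q * (Dp * xp powr (2*p - q)) > xp powr q * Kq" using xp by simp
    then show ?thesis using split[OF xp] by (simp add: algebra_simps)
  qed
  have mpos: "m > 0" using m1 m2 by (simp add: m_def)
  have fm: "f xm \<le> - m" and fp: "f xp \<ge> m" by (auto simp: m_def f_def)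
  have B1: "B \<ge> (4 * Lb * xp powr (2 * p + db) / m) powr (1 / (r * db))"
   and B2: "B \<ge> (4 * Lv * xp powr (q + dv) / m) powr (1 / (r * dv))"
   and B3: "B \<ge> (xp / eps0) powr (1 / r)"
    using B unfolding B0_def by (smt (verit) Max_ge finite.emptyI finite.insertI insertI1 insertI2)+
  have Bpos: "B > 0" using B3 xp eps0 by (smt (verit) powr_gt_zero divide_pos_pos)
  define sc where "sc = B powr (-r)"
  define T where "T = B powr (2*p*r)"
  have sp: "sc > 0" and Tp: "T > 0" using Bpos by (auto simp: sc_def T_def)
  have scale: "(y*sc) powr a = y powr a * B powr (-r*a)" if "y > 0" for y a
    using that sp Bpos by (simp add: powr_mult sc_def powr_powr)
  have seps: "xp * sc \<le> eps0"
  proof -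
    have "xp/eps0 = ((xp/eps0) powr (1/r)) powr r" using xp eps0 r by (simp add: powr_powr)
    also have "\<dots> \<le> B powr r" using r B3 xp eps0 by (intro powr_mono2) auto
    finally have "xp/eps0 \<le> B powr r" .
    then have "xp \<le> eps0 * B powr r" using eps0 by (simp add: field_simps)
    moreover have sB: "sc * B powr r = 1" using Bpos by (simp add: sc_def powr_add[symmetric])
    ultimately have "xp * sc \<le> eps0 * (sc * B powr r)" using sp
      by (smt (verit) mult.commute mult_le_cancel_right_pos mult.assoc)
    then show ?thesis using sB by simp
  qed
  have inrange: "0 < y*sc \<and> y*sc \<le> eps0" if "0 < y" "y \<le> xp" for y
    using that sp seps by (smt (verit) mult_right_mono mult_pos_pos)
  have Tmul: "T * B powr x = B powr (2*p*r + x)" for x by (simp only: T_def powr_add)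
  have e1: "T * B powr (-r * (2*p)) = 1"
  proof -
    have "2*p*r + -r * (2*p) = 0" by simp
    then show ?thesis using Tmul[of "-r * (2*p)"] Bpos by simp
  qed
  have e2: "T * B powr (-r * q) / B = 1"
  proof -
    have "2*p*r + -r * q = 1" using r by (simp add: algebra_simps)
    then show ?thesis using Tmul[of "-r * q"] Bpos by simp
  qed
  have e3: "T * B powr (-r * (2*p+db)) = B powr (-(r*db))"
  proof -
    have "2*p*r + -r * (2*p+db) = -(r*db)" by (simp add: algebra_simps)
    then show ?thesis using Tmul[of "-r * (2*p+db)"] by simp
  qed
  have e4: "T * B powr (-r * (q+dv)) / B = B powr (-(r*dv))"
  proof -
    have "2*p*r + -r * (q+dv) = 1 + -(r*dv)" using r by (simp add: algebra_simps)
    then have "T * B powr (-r * (q+dv)) = B powr 1 * B powr (-(r*dv))"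
      using Tmul[of "-r * (q+dv)"] by (simp only: powr_add)
    then show ?thesis using Bpos by simp
  qed
  have ident: "T * Delta (y*sc) B = f y + T * R (y*sc) B" if "0 < y" "y \<le> xp" for y
  proof -
    have "Delta (y*sc) B = Dp * (y*sc) powr (2*p) - Kq * (y*sc) powr q / B + R (y*sc) B"
      using expand inrange[OF that] Bpos by auto
    also have "\<dots> = Dp * (y powr (2*p) * B powr (-r*(2*p))) - Kq * (y powr q * B powr (-r*q)) / B + R (y*sc) B"
      by (simp only: scale[OF that(1)])
    finally have d: "Delta (y*sc) B = Dp * (y powr (2*p) * B powr (-r*(2*p))) - Kq * (y powr q * B powr (-r*q)) / B + R (y*sc) B" .
    have "T * Delta (y*sc) B = T * (Dp * (y powr (2*p) * B powr (-r*(2*p))) - Kq * (y powr q * B powr (-r*q)) / B + R (y*sc) B)"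
      by (subst d) (rule refl)
    also have "\<dots> = Dp * y powr (2*p) * (T * B powr (-r*(2*p))) - Kq * y powr q * (T * B powr (-r*q) / B) + T * R (y*sc) B"
      using Bpos by (simp add: field_simps)
    also have "\<dots> = f y + T * R (y*sc) B" unfolding e1 e2 by (simp add: f_def)
    finally show ?thesis .
  qed
  have rb: "T * \<bar>R (y*sc) B\<bar> \<le> m/2" if "0 < y" "y \<le> xp" for y
  proof -
    have "T * \<bar>R (y*sc) B\<bar> \<le> T * (Lb * (y*sc) powr (2 * p + db) + Lv * (y*sc) powr (q + dv) / B)"
      using remainder[of "y*sc" B] inrange[OF that] Bpos Tp by (intro mult_left_mono) auto
    also have "\<dots> = Lb * y powr (2*p+db) * (T * B powr (-r * (2*p+db)))
          + Lv * y powr (q+dv) * (T * B powr (-r * (q+dv)) / B)"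
      using scale[OF that(1)] by (simp add: algebra_simps)
    also have "\<dots> = Lb * y powr (2*p+db) * B powr (-(r*db)) + Lv * y powr (q+dv) * B powr (-(r*dv))"
      using e3 e4 by simp
    also have "\<dots> \<le> m/4 + m/4"
    proof (intro add_mono)
      show "Lb * y powr (2*p+db) * B powr (-(r*db)) \<le> m/4"
        using L r mpos xp that B1 p by (intro bnd_aux) (auto intro!: powr_mono2)
      show "Lv * y powr (q+dv) * B powr (-(r*dv)) \<le> m/4"
        using L r q mpos xp that B2 by (intro bnd_aux) (auto intro!: powr_mono2)
    qed
    finally show ?thesis by simp
  qed
  have neg: "Delta (xm * sc) B < 0"
  proof -
    have i: "T * Delta (xm*sc) B = f xm + T * R (xm*sc) B" using ident[of xm] xm xmp by simp
    have "\<bar>T * R (xm*sc) B\<bar> \<le> m/2" using rb[of xm] xm xmp Tp by (simp add: abs_mult)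
    then have "T * Delta (xm*sc) B < 0" using i fm mpos by linarith
    then show ?thesis using Tp by (simp add: mult_less_0_iff)
  qed
  have posi: "Delta (xp * sc) B > 0"
  proof -
    have i: "T * Delta (xp*sc) B = f xp + T * R (xp*sc) B" using ident[of xp] xp by simp
    have "\<bar>T * R (xp*sc) B\<bar> \<le> m/2" using rb[of xp] xp Tp by (simp add: abs_mult)
    then have "T * Delta (xp*sc) B > 0" using i fp mpos by linarith
    then show ?thesis using Tp by (simp add: zero_less_mult_iff)
  qed
  have ex: "\<exists>e. xm * sc \<le> e \<and> e \<le> xp * sc \<and> sign_crossing (\<lambda>e'. Delta e' B) e"
  proof (rule crossing_exists)
    show "xm * sc < xp * sc" using xmp sp by simp
    have "continuous_on {0<..eps0} (\<lambda>e. Delta e B)" using cont Bpos by blast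
    moreover have "xm * sc > 0" using xm sp by simp
    then have "{xm * sc..xp * sc} \<subseteq> {0<..eps0}" using seps by auto
    ultimately show "continuous_on {xm * sc..xp * sc} (\<lambda>e. Delta e B)" by (rule continuous_on_subset)
  qed (use neg posi in auto)
  have uniq: "\<exists>!e. xm * sc \<le> e \<and> e \<le> xp * sc \<and> sign_crossing (\<lambda>e'. Delta e' B) e"
    if fpos: "\<forall>x\<in>{xm..xp}. f' x > 0" and hyp: "\<exists>eta' M. (\<forall>x\<in>{xm..xp}.
              ((\<lambda>y. B powr (2 * p * r) * R (y * B powr (- r)) B) has_real_derivative eta' x)
                 (at x within {xm..xp}) \<and> \<bar>eta' x\<bar> \<le> M)
            \<and> M < (INF x\<in>{xm..xp}. f' x) / 2"
  proof -
    obtain eta' M where D: "\<And>x. x\<in>{xm..xp} \<Longrightarrow>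
              ((\<lambda>y. T * R (y * sc) B) has_real_derivative eta' x) (at x within {xm..xp})"
        and Mb: "\<And>x. x\<in>{xm..xp} \<Longrightarrow> \<bar>eta' x\<bar> \<le> M"
        and MI: "M < (INF x\<in>{xm..xp}. f' x) / 2"
      using hyp unfolding T_def sc_def by blast
    have bb: "bdd_below (f' ` {xm..xp})" using fpos by (intro bdd_belowI2[of _ 0]) (auto simp: less_imp_le)
    have Il: "(INF x\<in>{xm..xp}. f' x) \<le> f' x" if "x \<in> {xm..xp}" for x
      using bb that by (rule cINF_lower)
    have M0: "M \<ge> 0" using Mb[of xm] xmp by force
    define g where "g y = f y + T * R (y*sc) B" for y
    have gd: "(g has_real_derivative (f' x + eta' x)) (at x within {xm..xp})"
      if "x \<in> {xm..xp}" for x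
    proof -
      have x0: "x > 0" using that xm by auto
      have d1: "((\<lambda>y. y powr (2*p)) has_real_derivative (2*p) * x powr (2*p-1)) (at x)"
        by (rule has_real_derivative_powr[OF x0])
      have d2: "((\<lambda>y. y powr q) has_real_derivative q * x powr (q-1)) (at x)"
        by (rule has_real_derivative_powr[OF x0])
      have "(f has_real_derivative (Dp * ((2*p) * x powr (2*p-1)) - Kq * (q * x powr (q-1)))) (at x)"
        unfolding f_def[abs_def] by (rule DERIV_diff[OF DERIV_cmult[OF d1] DERIV_cmult[OF d2]])
      then have "(f has_real_derivative f' x) (at x)"
        by (rule DERIV_cong) (simp add: f'_def algebra_simps)
      then have fw: "(f has_real_derivative f' x) (at x within {xm..xp})"
        by (rule has_field_derivative_at_within)
      show ?thesis unfolding g_def[abs_def] by (rule DERIV_add[OF fw D[OF that]])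
    qed
    have gpos: "f' x + eta' x > 0" if "x \<in> {xm..xp}" for x
      using Il[OF that] Mb[OF that] MI M0 by linarith
    have gz: "g (e * B powr r) = 0 \<and> e * B powr r \<in> {xm..xp}"
      if "xm * sc \<le> e" "e \<le> xp * sc" "sign_crossing (\<lambda>e'. Delta e' B) e" for e
    proof -
      have sB: "sc * B powr r = 1" using Bpos by (simp add: sc_def powr_add[symmetric])
      have BP: "B powr r > 0" using Bpos by simp
      have "xm * sc * B powr r \<le> e * B powr r" "e * B powr r \<le> xp * sc * B powr r"
        using that BP by (auto intro: mult_right_mono)
      then have yin: "e * B powr r \<in> {xm..xp}" using sB by (simp add: mult.assoc)
      have ys: "e * B powr r * sc = e" using sB by (simp add: mult.assoc mult.commute)
      have "Delta e B = 0" using that(3) by (simp add: sign_crossing_def)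
      have y0: "0 < e * B powr r" using yin xm by auto
      have "g (e * B powr r) = T * Delta (e * B powr r * sc) B"
        using ident[OF y0] yin by (simp add: g_def)
      then have "g (e * B powr r) = T * Delta e B" by (simp only: ys)
      then show ?thesis using \<open>Delta e B = 0\<close> yin by simp
    qed
    have inj: "y1 = y2" if "y1 \<in> {xm..xp}" "y2 \<in> {xm..xp}" "g y1 = 0" "g y2 = 0" for y1 y2
    proof (rule ccontr)
      assume "y1 \<noteq> y2"
      then consider "y1 < y2" | "y2 < y1" by linarith
      then show False
      proof cases
        case 1
        then have "g y1 < g y2" using that gd gpos by (intro strict_mono_deriv[of xm xp g]) auto
        then show False using that by simp
      next
        case 2
        then have "g y2 < g y1" using that gd gpos by (intro strict_mono_deriv[of xm xp g]) auto
        then show False using that by simp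
      qed
    qed
    show ?thesis
    proof (rule ex_ex1I)
      show "\<exists>e. xm * sc \<le> e \<and> e \<le> xp * sc \<and> sign_crossing (\<lambda>e'. Delta e' B) e" by (rule ex)
    next
      fix e1 e2
      assume a1: "xm * sc \<le> e1 \<and> e1 \<le> xp * sc \<and> sign_crossing (\<lambda>e'. Delta e' B) e1"
        and a2: "xm * sc \<le> e2 \<and> e2 \<le> xp * sc \<and> sign_crossing (\<lambda>e'. Delta e' B) e2"
      have "e1 * B powr r = e2 * B powr r" using gz a1 a2 inj by meson
      then show "e1 = e2" using Bpos by simp
    qed
  qed
  show ?thesis using mpos neg posi ex uniq unfolding sc_def by blast
qed

end
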